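(* There are $2^{\aleph_0}$ Epstein incomplete logics. More precisely, with $p,q$ distinct propositional letters, $p^0:=q\looparrowright p$, $p^{n+1}:=p\to p^n$ and $\Lambda_S:=\{q\looparrowright p^m:m\in S\}$: for every non-empty $S\subseteq\omega\setminus\{0\}$ the logic $\mathcal{F}\Lambda_S$ is Epstein incomplete, and the logics $\mathcal{F}\Lambda_S$ for distinct such $S$ are pairwise distinct.
   Context: Language: propositional letters $\Phi=\{p_0,p_1,\dots\}$; connectives $\neg$, $\lor,\wedge,\to,\leftrightarrow,\vartriangle,\looparrowright$; $\mathsf{FOR}$ the set of all formulas. An Epstein model is $\langle v,\mathfrak{R}\rangle$ with $v:\Phi\to\{0,1\}$ and $\mathfrak{R}\subseteq\mathsf{FOR}^2$ (an Epstein relation); truth: letters via $v$, boolean connectives classical, $\langle v,\mathfrak{R}\rangle\vDash\varphi\vartriangle\psi$ iff both true and $\langle\varphi,\psi\rangle\in\mathfrak{R}$; $\langle v,\mathfrak{R}\rangle\vDash\varphi\looparrowright\psi$ iff $\varphi\to\psi$ true and $\langle\varphi,\psi\rangle\in\mathfrak{R}$. $\mathfrak{R}\vDash\varphi$ iff true under every valuation. $\mathcal{F}$ is the least set containing all classical tautologies of the language and the axioms $(p\looparrowright q)\to(p\to q)$, $(p\vartriangle q)\leftrightarrow((p\looparrowright q)\wedge(p\wedge q))$, closed under uniform substitution and modus ponens; $\mathcal{F}\Lambda$ is the least set containing $\mathcal{F}\cup\Lambda$ closed under uniform substitution and modus ponens. A logic is a set of formulas containing $\mathcal{F}$ closed under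 uniform substitution and modus ponens. A logic $\lambda$ is Epstein complete iff there is a set $X$ of Epstein relations with $\lambda=\{\varphi:\mathfrak{R}\vDash\varphi\text{ for all }\mathfrak{R}\in X\}$; otherwise it is Epstein incomplete. *)

theory Defs
  imports Main
begin

text \<open>Formulas: letters p_n, negation, or, and, implication, equivalence,
  the Epstein conjunction (Tri, the triangle connective) and the Epstein
  implication (Loop, the looparrowright connective).\<close>
datatype form =
    Var nat
  | Neg form
  | Or form form
  | And form form
  | Imp form form
  | Iff form form
  | Tri form form
  | Loop form form

fun holds :: "(nat \<Rightarrow> bool) \<Rightarrow> (form \<times> form) set \<Rightarrow> form \<Rightarrow> bool" where
  "holds v R (Var n) = v n"
| "holds v R (Neg a) = (\<not> holds v R a)"
| "holds v R (Or a b) = (holds v R a \<or> holds v R b)"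
| "holds v R (And a b) = (holds v R a \<and> holds v R b)"
| "holds v R (Imp a b) = (holds v R a \<longrightarrow> holds v R b)"
| "holds v R (Iff a b) = (holds v R a \<longleftrightarrow> holds v R b)"
| "holds v R (Tri a b) = (holds v R a \<and> holds v R b \<and> (a, b) \<in> R)"
| "holds v R (Loop a b) = ((holds v R a \<longrightarrow> holds v R b) \<and> (a, b) \<in> R)"

definition valid_in :: "(form \<times> form) set \<Rightarrow> form \<Rightarrow> bool" where
  "valid_in R \<phi> \<longleftrightarrow> (\<forall>v. holds v R \<phi>)"

fun beval :: "(form \<Rightarrow> bool) \<Rightarrow> form \<Rightarrow> bool" where
  "beval f (Var n) = f (Var n)"
| "beval f (Neg a) = (\<not> beval f a)"
| "beval f (Or a b) = (beval f a \<or> beval f b)"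
| "beval f (And a b) = (beval f a \<and> beval f b)"
| "beval f (Imp a b) = (beval f a \<longrightarrow> beval f b)"
| "beval f (Iff a b) = (beval f a \<longleftrightarrow> beval f b)"
| "beval f (Tri a b) = f (Tri a b)"
| "beval f (Loop a b) = f (Loop a b)"

definition taut :: "form \<Rightarrow> bool" where
  "taut \<phi> \<longleftrightarrow> (\<forall>f. beval f \<phi>)"

fun subst :: "(nat \<Rightarrow> form) \<Rightarrow> form \<Rightarrow> form" where
  "subst \<sigma> (Var n) = \<sigma> n"
| "subst \<sigma> (Neg a) = Neg (subst \<sigma> a)"
| "subst \<sigma> (Or a b) = Or (subst \<sigma> a) (subst \<sigma> b)"
| "subst \<sigma> (And a b) = And (subst \<sigma> a) (subst \<sigma> b)"
| "subst \<sigma> (Imp a b) = Imp (subst \<sigma> a) (subst \<sigma> b)"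
| "subst \<sigma> (Iff a b) = Iff (subst \<sigma> a) (subst \<sigma> b)"
| "subst \<sigma> (Tri a b) = Tri (subst \<sigma> a) (subst \<sigma> b)"
| "subst \<sigma> (Loop a b) = Loop (subst \<sigma> a) (subst \<sigma> b)"

text \<open>F Lambda: least set containing the tautologies, the two axioms
  (with p = p_0, q = p_1) and Lambda, closed under uniform substitution and
  modus ponens. F itself is FL {}.\<close>
inductive_set FL :: "form set \<Rightarrow> form set" for \<Lambda> :: "form set" where
  taut: "taut \<phi> \<Longrightarrow> \<phi> \<in> FL \<Lambda>"
| ax1: "Imp (Loop (Var 0) (Var 1)) (Imp (Var 0) (Var 1)) \<in> FL \<Lambda>"
| ax2: "Iff (Tri (Var 0) (Var 1)) (And (Loop (Var 0) (Var 1)) (And (Var 0) (Var 1))) \<in> FL \<Lambda>"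
| hyp: "\<phi> \<in> \<Lambda> \<Longrightarrow> \<phi> \<in> FL \<Lambda>"
| sub: "\<phi> \<in> FL \<Lambda> \<Longrightarrow> subst \<sigma> \<phi> \<in> FL \<Lambda>"
| mp: "\<phi> \<in> FL \<Lambda> \<Longrightarrow> Imp \<phi> \<psi> \<in> FL \<Lambda> \<Longrightarrow> \<psi> \<in> FL \<Lambda>"

definition epstein_complete :: "form set \<Rightarrow> bool" where
  "epstein_complete L \<longleftrightarrow>
     (\<exists>X :: (form \<times> form) set set. L = {\<phi>. \<forall>R\<in>X. valid_in R \<phi>})"

fun ppow :: "nat \<Rightarrow> nat \<Rightarrow> nat \<Rightarrow> form" where
  "ppow a b 0 = Loop (Var b) (Var a)"
| "ppow a b (Suc n) = Imp (Var a) (ppow a b n)"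

definition LamS :: "nat \<Rightarrow> nat \<Rightarrow> nat set \<Rightarrow> form set" where
  "LamS a b S = {Loop (Var b) (ppow a b m) | m. m \<in> S}"

end

theory Submission
  imports Defs
begin

fun pw :: "form \<Rightarrow> form \<Rightarrow> nat \<Rightarrow> form" where
  "pw x A 0 = Loop x A"
| "pw x A (Suc n) = Imp A (pw x A n)"

definition shp :: "nat set \<Rightarrow> form \<Rightarrow> form \<Rightarrow> bool" where
  "shp S x y \<longleftrightarrow> (\<exists>A m. m \<in> S \<and> y = pw x A m)"

fun gh :: "nat set \<Rightarrow> (nat \<Rightarrow> bool) \<Rightarrow> form \<Rightarrow> bool" where
  "gh S v (Var n) = v n"
| "gh S v (Neg a) = (\<not> gh S v a)"
| "gh S v (Or a b) = (gh S v a \<or> gh S v b)"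
| "gh S v (And a b) = (gh S v a \<and> gh S v b)"
| "gh S v (Imp a b) = (gh S v a \<longrightarrow> gh S v b)"
| "gh S v (Iff a b) = (gh S v a \<longleftrightarrow> gh S v b)"
| "gh S v (Tri a b) = (gh S v a \<and> gh S v b)"
| "gh S v (Loop a b) = (if shp S a b then (gh S v a \<longrightarrow> gh S v b) else (gh S v a \<and> gh S v b))"

lemma beval_gh: "gh S v (subst \<sigma> \<phi>) = beval (\<lambda>x. gh S v (subst \<sigma> x)) \<phi>"
  by (induction \<phi>) simp_all

lemma subst_subst: "subst \<sigma> (subst \<tau> \<phi>) = subst (\<lambda>n. subst \<sigma> (\<tau> n)) \<phi>"
  by (induction \<phi>) simp_all

lemma subst_Var: "subst Var \<phi> = \<phi>"
  by (induction \<phi>) simp_all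

lemma subst_ppow: "subst \<sigma> (ppow a b m) = pw (\<sigma> b) (\<sigma> a) m"
  by (induction m) simp_all

lemma ppow_pw: "ppow a b m = pw (Var b) (Var a) m"
  by (induction m) simp_all

lemma pw_inj: "pw x A m = pw x A' n \<Longrightarrow> m = n"
proof (induction m arbitrary: n)
  case 0 then show ?case by (cases n) auto
next
  case (Suc m) then show ?case by (cases n) auto
qed

lemma gh_pw0: "gh S v B \<Longrightarrow> gh S v A \<Longrightarrow> gh S v (pw B A n)"
  by (induction n) auto

lemma gh_pw: "m \<ge> 1 \<Longrightarrow> gh S v B \<Longrightarrow> gh S v (pw B A m)"
  by (cases m) (auto intro: gh_pw0)

lemma sound: "\<phi> \<in> FL (LamS a b S) \<Longrightarrow> 0 \<notin> S \<Longrightarrow> gh S v (subst \<sigma> \<phi>)"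
proof (induction \<phi> arbitrary: \<sigma> v rule: FL.induct)
  case (taut \<phi>) then show ?case unfolding taut_def by (subst beval_gh) blast
next
  case ax1 then show ?case by auto
next
  case ax2 then show ?case by auto
next
  case (hyp \<phi>)
  then obtain m where m: "m \<in> S" "\<phi> = Loop (Var b) (ppow a b m)" by (auto simp: LamS_def)
  with hyp have "m \<ge> 1" by (cases m) auto
  with m show ?case by (auto simp: subst_ppow shp_def intro: gh_pw)
next
  case (sub \<phi> \<tau>) then show ?case by (simp add: subst_subst)
next
  case (mp \<phi> \<psi>) then show ?case by fastforce
qed

lemma ppow_R: "v a \<Longrightarrow> holds v R (ppow a b n) \<Longrightarrow> (Var b, Var a) \<in> R"
  by (induction n) auto

lemma distinct_FL:
  assumes "k \<in> S" "k \<notin> T" "0 \<notin> T"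
  shows "FL (LamS a b S) \<noteq> FL (LamS a b T)"
proof
  assume eq: "FL (LamS a b S) = FL (LamS a b T)"
  have "Loop (Var b) (ppow a b k) \<in> FL (LamS a b S)"
    using assms by (auto intro: FL.hyp simp: LamS_def)
  with eq have "gh T (\<lambda>_. False) (subst Var (Loop (Var b) (ppow a b k)))"
    using sound assms(3) by blast
  moreover have "\<not> shp T (Var b) (ppow a b k)"
  proof
    assume "shp T (Var b) (ppow a b k)"
    then obtain A m where "m \<in> T" "pw (Var b) (Var a) k = pw (Var b) A m"
      by (auto simp: shp_def ppow_pw)
    then have "m = k" using pw_inj by metis
    with \<open>m \<in> T\<close> assms(2) show False by simp
  qed
  ultimately show False by (simp add: subst_Var)
qed

theorem mainTheorem10:
  fixes a b :: nat
  assumes "a \<noteq> b"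
  shows "(\<forall>S :: nat set. S \<noteq> {} \<and> 0 \<notin> S \<longrightarrow> \<not> epstein_complete (FL (LamS a b S)))
       \<and> (\<forall>S T :: nat set. S \<noteq> {} \<and> 0 \<notin> S \<and> T \<noteq> {} \<and> 0 \<notin> T \<and> S \<noteq> T
            \<longrightarrow> FL (LamS a b S) \<noteq> FL (LamS a b T))"
proof (intro conjI allI impI)
  fix S :: "nat set"
  assume S: "S \<noteq> {} \<and> 0 \<notin> S"
  show "\<not> epstein_complete (FL (LamS a b S))"
  proof
    assume "epstein_complete (FL (LamS a b S))"
    then obtain X where X: "FL (LamS a b S) = {\<phi>. \<forall>R\<in>X. valid_in R \<phi>}"
      by (auto simp: epstein_complete_def)
    from S obtain m where m: "m \<in> S" by auto
    define \<chi> where "\<chi> = Imp (Imp (Var b) (Var a)) (Loop (Var b) (Var a))"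
    have lm: "Loop (Var b) (ppow a b m) \<in> FL (LamS a b S)"
      using m by (auto intro: FL.hyp simp: LamS_def)
    have "\<chi> \<in> FL (LamS a b S)"
      unfolding X
    proof (safe)
      fix R assume R: "R \<in> X"
      with lm X have "valid_in R (Loop (Var b) (ppow a b m))" by auto
      then have "holds (\<lambda>_. True) R (Loop (Var b) (ppow a b m))" by (simp add: valid_in_def)
      then have "(Var b, Var a) \<in> R" using ppow_R[of "\<lambda>_. True" a R b m] by auto
      then show "valid_in R \<chi>" by (simp add: valid_in_def \<chi>_def)
    qed
    then have "gh S (\<lambda>_. False) (subst Var \<chi>)" using sound S by blast
    moreover have "\<not> shp S (Var b) (Var a)"
    proof
      assume "shp S (Var b) (Var a)"
      then obtain A n where "Var a = pw (Var b) A n" by (auto simp: shp_def)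
      then show False by (cases n) auto
    qed
    ultimately show False by (simp add: subst_Var \<chi>_def)
  qed
next
  fix S T :: "nat set"
  assume H: "S \<noteq> {} \<and> 0 \<notin> S \<and> T \<noteq> {} \<and> 0 \<notin> T \<and> S \<noteq> T"
  then obtain k where k: "(k \<in> S \<and> k \<notin> T) \<or> (k \<in> T \<and> k \<notin> S)" by blast
  then show "FL (LamS a b S) \<noteq> FL (LamS a b T)"
  proof
    assume "k \<in> S \<and> k \<notin> T"
    then show ?thesis using H distinct_FL[of k S T a b] by blast
  next
    assume "k \<in> T \<and> k \<notin> S"
    then show ?thesis using H distinct_FL[of k T S a b] by auto
  qed
qed

end
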